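(* Suppose we are given six bases of $V$, called basis 1, …, basis 6. The following are equivalent: (i) the transition matrix from basis 1 to basis 2, from basis 3 to basis 4, and from basis 5 to basis 6 is upper triangular Toeplitz, and the transition matrix from basis 2 to basis 3, from basis 4 to basis 5, and from basis 6 to basis 1 is antidiagonal; (ii) there exists an LR triple $A,B,C$ on $V$ such that basis 1, 2, 3, 4, 5, 6 is an $(A,C)$-basis, $(A,B)$-basis, $(B,A)$-basis, $(B,C)$-basis, $(C,B)$-basis, $(C,A)$-basis of $V$, respectively. If (i), (ii) hold, then the LR triple $A,B,C$ is uniquely determined by the six bases.
   Context: Let $V$ be a vector space over a field $\mathbb F$ with $\dim V=d+1$, $d\ge0$; matrices are indexed by $0,\dots,d$. The transition matrix from a basis $(u_i)$ to a basis $(v_i)$ is $S$ with $v_k=\sum_iS_{ik}u_i$. A matrix is upper triangular Toeplitz if its $(i,k)$-entry is $\gamma_{k-i}$ for $i\le k$ and $0$ for $i>k$, for some scalars $\gamma_0,\dots,\gamma_d$; it is antidiagonal if its $(i,k)$-entry is $0$ whenever $i+k\ne d$. A decomposition of $V$ is a sequence $(V_i)_{i=0}^d$ of one-dimensional subspaces with $V=\bigoplus V_i$; $X$ lowers it if $XV_i=V_{i-1}$ ($1\le i\le d$), $XV_0=0$; raises it if $XV_i=V_{i+1}$ ($0\le i\le d-1$), $XV_d=0$. An ordered pair $X,Y$ is an LR pair if some decomposition (unique, the $(X,Y)$-decomposition) is lowered by $X$ and raised by $Y$. An LR triple is $A,B,C\in\mathrm{End}(V)$ such that every ordered pair of distinct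 elements among $A,B,C$ is an LR pair. For an LR pair $X,Y$, an $(X,Y)$-basis is a basis $(v_i)$ with $v_i$ in the $i$-th component of the $(X,Y)$-decomposition and $Xv_i=v_{i-1}$ for $1\le i\le d$. *)

theory Defs
  imports "HOL.Vector_Spaces"
begin

text \<open>Setting: a vector space V (the type 'v) over a field 'f, with scalar
multiplication scale, of dimension d+1. Sequences indexed by 0..d are
functions on nat; only the values at indices 0..d matter.\<close>

definition is_basis_seq :: "('f::field \<Rightarrow> 'v::ab_group_add \<Rightarrow> 'v) \<Rightarrow> nat \<Rightarrow> (nat \<Rightarrow> 'v) \<Rightarrow> bool" where
  "is_basis_seq scale d v \<longleftrightarrow>
     inj_on v {0..d} \<and>
     \<not> module.dependent scale (v ` {0..d}) \<and>
     module.span scale (v ` {0..d}) = UNIV"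

definition is_transition_matrix ::
  "('f::field \<Rightarrow> 'v::ab_group_add \<Rightarrow> 'v) \<Rightarrow> nat \<Rightarrow> (nat \<Rightarrow> 'v) \<Rightarrow> (nat \<Rightarrow> 'v) \<Rightarrow> (nat \<Rightarrow> nat \<Rightarrow> 'f) \<Rightarrow> bool" where
  "is_transition_matrix scale d u v S \<longleftrightarrow>
     (\<forall>k\<le>d. v k = (\<Sum>i\<le>d. scale (S i k) (u i)))"

definition upper_triangular_toeplitz :: "nat \<Rightarrow> (nat \<Rightarrow> nat \<Rightarrow> 'f::field) \<Rightarrow> bool" where
  "upper_triangular_toeplitz d S \<longleftrightarrow>
     (\<exists>\<gamma>::nat \<Rightarrow> 'f. \<forall>i\<le>d. \<forall>k\<le>d. S i k = (if i \<le> k then \<gamma> (k - i) else 0))"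

definition antidiagonal :: "nat \<Rightarrow> (nat \<Rightarrow> nat \<Rightarrow> 'f::field) \<Rightarrow> bool" where
  "antidiagonal d S \<longleftrightarrow> (\<forall>i\<le>d. \<forall>k\<le>d. i + k \<noteq> d \<longrightarrow> S i k = 0)"

text \<open>The transition matrix from u to v (unique, since u is a basis) is upper
triangular Toeplitz / antidiagonal.\<close>
definition trans_UTT where
  "trans_UTT scale d u v \<longleftrightarrow> (\<exists>S. is_transition_matrix scale d u v S \<and> upper_triangular_toeplitz d S)"

definition trans_antidiag where
  "trans_antidiag scale d u v \<longleftrightarrow> (\<exists>S. is_transition_matrix scale d u v S \<and> antidiagonal d S)"

definition is_decomposition :: "('f::field \<Rightarrow> 'v::ab_group_add \<Rightarrow> 'v) \<Rightarrow> nat \<Rightarrow> (nat \<Rightarrow> 'v set) \<Rightarrow> bool" where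
  "is_decomposition scale d Vs \<longleftrightarrow>
     (\<forall>i\<le>d. module.subspace scale (Vs i) \<and> vector_space.dim scale (Vs i) = 1) \<and>
     (\<forall>v. \<exists>!x::nat \<Rightarrow> 'v. (\<forall>i\<le>d. x i \<in> Vs i) \<and> (\<forall>i>d. x i = 0) \<and> v = (\<Sum>i\<le>d. x i))"

definition lowers :: "nat \<Rightarrow> ('v::ab_group_add \<Rightarrow> 'v) \<Rightarrow> (nat \<Rightarrow> 'v set) \<Rightarrow> bool" where
  "lowers d X Vs \<longleftrightarrow> (\<forall>i. 1 \<le> i \<and> i \<le> d \<longrightarrow> X ` Vs i = Vs (i - 1)) \<and> X ` Vs 0 = {0}"

definition raises :: "nat \<Rightarrow> ('v::ab_group_add \<Rightarrow> 'v) \<Rightarrow> (nat \<Rightarrow> 'v set) \<Rightarrow> bool" where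
  "raises d Y Vs \<longleftrightarrow> (\<forall>i<d. Y ` Vs i = Vs (i + 1)) \<and> Y ` Vs d = {0}"

definition is_LR_pair :: "('f::field \<Rightarrow> 'v::ab_group_add \<Rightarrow> 'v) \<Rightarrow> nat \<Rightarrow> ('v \<Rightarrow> 'v) \<Rightarrow> ('v \<Rightarrow> 'v) \<Rightarrow> bool" where
  "is_LR_pair scale d X Y \<longleftrightarrow>
     Vector_Spaces.linear scale scale X \<and> Vector_Spaces.linear scale scale Y \<and>
     (\<exists>Vs. is_decomposition scale d Vs \<and> lowers d X Vs \<and> raises d Y Vs)"

definition is_LR_triple :: "('f::field \<Rightarrow> 'v::ab_group_add \<Rightarrow> 'v) \<Rightarrow> nat \<Rightarrow> ('v \<Rightarrow> 'v) \<Rightarrow> ('v \<Rightarrow> 'v) \<Rightarrow> ('v \<Rightarrow> 'v) \<Rightarrow> bool" where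
  "is_LR_triple scale d A B C \<longleftrightarrow>
     is_LR_pair scale d A B \<and> is_LR_pair scale d B A \<and>
     is_LR_pair scale d A C \<and> is_LR_pair scale d C A \<and>
     is_LR_pair scale d B C \<and> is_LR_pair scale d C B"

text \<open>An (X,Y)-basis. The (X,Y)-decomposition is unique, so "the i-th component of
the (X,Y)-decomposition" is the i-th component of any decomposition lowered by X and raised by Y.\<close>
definition is_XY_basis :: "('f::field \<Rightarrow> 'v::ab_group_add \<Rightarrow> 'v) \<Rightarrow> nat \<Rightarrow> ('v \<Rightarrow> 'v) \<Rightarrow> ('v \<Rightarrow> 'v) \<Rightarrow> (nat \<Rightarrow> 'v) \<Rightarrow> bool" where
  "is_XY_basis scale d X Y v \<longleftrightarrow>
     is_LR_pair scale d X Y \<and> is_basis_seq scale d v \<and>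
     (\<exists>Vs. is_decomposition scale d Vs \<and> lowers d X Vs \<and> raises d Y Vs \<and> (\<forall>i\<le>d. v i \<in> Vs i)) \<and>
     (\<forall>i. 1 \<le> i \<and> i \<le> d \<longrightarrow> X (v i) = v (i - 1))"

definition six_bases_triple where
  "six_bases_triple scale d u1 u2 u3 u4 u5 u6 A B C \<longleftrightarrow>
     is_LR_triple scale d A B C \<and>
     is_XY_basis scale d A C u1 \<and> is_XY_basis scale d A B u2 \<and>
     is_XY_basis scale d B A u3 \<and> is_XY_basis scale d B C u4 \<and>
     is_XY_basis scale d C B u5 \<and> is_XY_basis scale d C A u6"

end

theory Submission
  imports Defs
begin

context vector_space begin


lemma lin_scale: "Vector_Spaces.linear scale scale X \<Longrightarrow> X (c *s x) = c *s X x"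
  by (simp add: linear_iff)
lemma lin_sum: "Vector_Spaces.linear scale scale X \<Longrightarrow> X (sum g S) = (\<Sum>a\<in>S. X (g a))"
  by (metis module_hom.sum module_hom_iff_linear)
lemma lin_zero: "Vector_Spaces.linear scale scale X \<Longrightarrow> X 0 = 0"
  by (metis module_hom.zero module_hom_iff_linear)

lemma basis_indep:
  assumes b: "is_basis_seq scale d u" and s: "(\<Sum>i\<le>d. c i *s u i) = 0" and j: "j \<le> d"
  shows "c j = 0"
proof (rule ccontr)
  assume nz: "c j \<noteq> 0"
  let ?U = "u ` {0..d}"
  have inj: "inj_on u {0..d}" and ind: "\<not> dependent ?U" using b by (auto simp: is_basis_seq_def)
  define w where "w = (\<lambda>v. c (inv_into {0..d} u v))"
  have "(\<Sum>v\<in>?U. w v *s v) = (\<Sum>i\<in>{0..d}. w (u i) *s u i)"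
    by (rule sum.reindex[OF inj, unfolded comp_def])
  also have "\<dots> = (\<Sum>i\<le>d. c i *s u i)"
    using inj by (auto simp: w_def atLeast0AtMost intro!: sum.cong)
  finally have z: "(\<Sum>v\<in>?U. w v *s v) = 0" using s by simp
  have "w (u j) \<noteq> 0" using nz inj j by (simp add: w_def)
  moreover have "u j \<in> ?U" using j by auto
  ultimately have "dependent ?U"
    using z dependent_finite[of ?U] by blast
  with ind show False by simp
qed

lemma basis_span:
  assumes b: "is_basis_seq scale d u"
  shows "\<exists>c. v = (\<Sum>i\<le>d. c i *s u i)"
proof -
  let ?U = "u ` {0..d}"
  have inj: "inj_on u {0..d}" and sp: "span ?U = UNIV" using b by (auto simp: is_basis_seq_def)
  have "v \<in> span ?U" using sp by simp
  then obtain w where "v = (\<Sum>x\<in>?U. w x *s x)" by (auto simp: span_finite)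
  also have "\<dots> = (\<Sum>i\<in>{0..d}. w (u i) *s u i)"
    by (rule sum.reindex[OF inj, unfolded comp_def])
  finally show ?thesis by (auto simp: atLeast0AtMost)
qed

lemma basis_nz:
  assumes b: "is_basis_seq scale d u" and j: "j \<le> d" shows "u j \<noteq> 0"
  using b j dependent_zero[of "u ` {0..d}"] by (force simp: is_basis_seq_def)

lemma basis_unique:
  assumes b: "is_basis_seq scale d u" and s: "(\<Sum>i\<le>d. c i *s u i) = (\<Sum>i\<le>d. c' i *s u i)" and j: "j \<le> d"
  shows "c j = c' j"
proof -
  have "(\<Sum>i\<le>d. (c i - c' i) *s u i) = 0"
    using s by (simp add: scale_left_diff_distrib sum_subtractf)
  from basis_indep[OF b this j] show ?thesis by simp
qed

lemma lin_eq_basis: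
  assumes b: "is_basis_seq scale d u" and lX: "Vector_Spaces.linear scale scale X"
    and lY: "Vector_Spaces.linear scale scale Y" and eq: "\<forall>i\<le>d. X (u i) = Y (u i)"
  shows "X = Y"
proof
  fix v
  obtain c where c: "v = (\<Sum>i\<le>d. c i *s u i)" using basis_span[OF b] by blast
  show "X v = Y v" using eq by (simp add: c lin_sum[OF lX] lin_sum[OF lY] lin_scale[OF lX] lin_scale[OF lY])
qed

lemma exists_lin:
  assumes b: "is_basis_seq scale d u"
  shows "\<exists>X. Vector_Spaces.linear scale scale X \<and> (\<forall>i\<le>d. X (u i) = f i)"
proof -
  interpret P: vector_space_pair scale scale by unfold_locales
  have inj: "inj_on u {0..d}" and ind: "\<not> dependent (u ` {0..d})" using b by (auto simp: is_basis_seq_def)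
  let ?X = "P.construct (u ` {0..d}) (\<lambda>x. f (inv_into {0..d} u x))"
  have "Vector_Spaces.linear scale scale ?X" using P.linear_construct ind by blast
  moreover have "\<forall>i\<le>d. ?X (u i) = f i"
    using P.construct_basis[OF ind] inj by auto
  ultimately show ?thesis by blast
qed


lemma shift:
  assumes lX: "Vector_Spaces.linear scale scale X" and l0: "X (u 0) = 0"
    and l1: "\<forall>i. 1 \<le> i \<and> i \<le> d \<longrightarrow> X (u i) = u (i - 1)"
  shows "X (\<Sum>i\<le>d. c i *s u i) = (\<Sum>i\<le>d. (if i < d then c (Suc i) else 0) *s u i)"
proof -
  have "X (\<Sum>i\<le>d. c i *s u i) = (\<Sum>i<Suc d. c i *s X (u i))"
    by (simp add: lin_sum[OF lX] lin_scale[OF lX] lessThan_Suc_atMost)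
  also have "\<dots> = c 0 *s X (u 0) + (\<Sum>i<d. c (Suc i) *s X (u (Suc i)))"
    by (rule sum.lessThan_Suc_shift)
  also have "\<dots> = (\<Sum>i<d. c (Suc i) *s u i)"
    using l0 l1 by (auto intro!: sum.cong)
  also have "\<dots> = (\<Sum>i<Suc d. (if i < d then c (Suc i) else 0) *s u i)"
    by simp
  finally show ?thesis by (simp add: lessThan_Suc_atMost)
qed

lemma dim1_sub:
  assumes W: "subspace W" and d1: "dim W = 1" and x: "x \<in> W" "x \<noteq> 0"
  shows "W \<subseteq> span {x}"
proof -
  obtain B where B: "B \<subseteq> W" "independent B" "W \<subseteq> span B" "card B = dim W"
    by (rule basis_exists)
  then obtain b where Bb: "B = {b}" using d1 by (metis card_1_singletonE)
  have "x \<in> span {b}" using x B Bb by auto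
  then obtain k where k: "x = k *s b" by (auto simp: span_singleton)
  have "k \<noteq> 0" using k x by auto
  show ?thesis
  proof
    fix w assume "w \<in> W"
    then obtain t where "w = t *s b" using B Bb by (auto simp: span_singleton)
    also have "\<dots> = (t * inverse k) *s x" using k \<open>k \<noteq> 0\<close> by simp
    finally show "w \<in> span {x}" by (auto simp: span_singleton)
  qed
qed

lemma decomp:
  assumes b: "is_basis_seq scale d u"
  shows "is_decomposition scale d (\<lambda>i. span {u i})"
  unfolding is_decomposition_def
proof (intro conjI allI impI)
  fix i assume i: "i \<le> d"
  show "subspace (span {u i})" by (rule subspace_span)
  have "independent {u i}" using basis_nz[OF b i] by simp
  then show "dim (span {u i}) = 1" using dim_span_eq_card_independent[of "{u i}"] by simp
next
  fix v
  let ?P = "\<lambda>x::nat \<Rightarrow> 'b. (\<forall>i\<le>d. x i \<in> span {u i}) \<and> (\<forall>i>d. x i = 0) \<and> v = (\<Sum>i\<le>d. x i)"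
  obtain c where c: "v = (\<Sum>i\<le>d. c i *s u i)" using basis_span[OF b] by blast
  have ex: "?P (\<lambda>i. if i \<le> d then c i *s u i else 0)"
    using c by (auto simp: span_singleton)
  have un: "x = y" if x: "?P x" and y: "?P y" for x y
  proof -
    have "\<forall>i. \<exists>k. i \<le> d \<longrightarrow> x i = k *s u i" using x by (auto simp: span_singleton)
    then obtain p where p: "\<And>i. i \<le> d \<Longrightarrow> x i = p i *s u i" by metis
    have "\<forall>i. \<exists>k. i \<le> d \<longrightarrow> y i = k *s u i" using y by (auto simp: span_singleton)
    then obtain q where q: "\<And>i. i \<le> d \<Longrightarrow> y i = q i *s u i" by metis
    have "(\<Sum>i\<le>d. p i *s u i) = (\<Sum>i\<le>d. q i *s u i)"
      using x y p q by (metis (no_types, lifting) atMost_iff sum.cong)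
    then have "\<And>i. i \<le> d \<Longrightarrow> p i = q i" using basis_unique[OF b] by blast
    then show "x = y" using p q x y by (metis not_le_imp_less ext)
  qed
  show "\<exists>!x. ?P x" by (rule ex1I[of ?P, OF ex]) (rule un[OF _ ex])
qed



lemma utt_of_lower:
  assumes bu: "is_basis_seq scale d u" and bv: "is_basis_seq scale d v"
    and lX: "Vector_Spaces.linear scale scale X"
    and u0: "X (u 0) = 0" and u1: "\<forall>i. 1 \<le> i \<and> i \<le> d \<longrightarrow> X (u i) = u (i - 1)"
    and v0: "X (v 0) = 0" and v1: "\<forall>i. 1 \<le> i \<and> i \<le> d \<longrightarrow> X (v i) = v (i - 1)"
  shows "trans_UTT scale d u v"
proof -
  have "\<forall>k. \<exists>c. v k = (\<Sum>i\<le>d. c i *s u i)" using basis_span[OF bu] by blast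
  then obtain c where c: "\<And>k. v k = (\<Sum>i\<le>d. c k i *s u i)" by metis
  have Xv: "X (v k) = (\<Sum>i\<le>d. (if i < d then c k (Suc i) else 0) *s u i)" for k
    using shift[OF lX u0 u1] c by simp
  have key1: "c (k - 1) i = c k (Suc i)" if k: "1 \<le> k" "k \<le> d" and i: "i < d" for k i
  proof -
    have "(\<Sum>i\<le>d. c (k - 1) i *s u i) = (\<Sum>i\<le>d. (if i < d then c k (Suc i) else 0) *s u i)"
      using Xv[of k] v1 k c[of "k - 1"] by simp
    from basis_unique[OF bu this, of i] i show ?thesis by simp
  qed
  have key0: "c 0 (Suc i) = 0" if i: "i < d" for i
  proof -
    have "(\<Sum>i\<le>d. (if i < d then c 0 (Suc i) else 0) *s u i) = 0"
      using Xv[of 0] v0 by simp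
    from basis_indep[OF bu this, of i] i show ?thesis by simp
  qed
  have claim: "\<forall>k\<le>d. c k i = (if i \<le> k then c (k - i) 0 else 0)" if "i \<le> d" for i
    using that
  proof (induction i)
    case 0 then show ?case by simp
  next
    case (Suc i)
    show ?case
    proof (intro allI impI)
      fix k assume k: "k \<le> d"
      show "c k (Suc i) = (if Suc i \<le> k then c (k - Suc i) 0 else 0)"
      proof (cases "k = 0")
        case True then show ?thesis using key0 Suc.prems by simp
      next
        case False
        then have "c k (Suc i) = c (k - 1) i" using key1[of k i] k Suc.prems by simp
        also have "\<dots> = (if i \<le> k - 1 then c (k - 1 - i) 0 else 0)"
          using Suc.IH[rule_format, of "k - 1"] Suc.prems k by simp
        finally have e: "c k (Suc i) = (if i \<le> k - 1 then c (k - 1 - i) 0 else 0)" .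
        have e1: "k - 1 - i = k - Suc i" by simp
        have e2: "(i \<le> k - 1) = (Suc i \<le> k)" using False by arith
        show ?thesis using e unfolding e1 e2 .
      qed
    qed
  qed
  show ?thesis unfolding trans_UTT_def is_transition_matrix_def upper_triangular_toeplitz_def
  proof (intro exI[of _ "\<lambda>i k. c k i"] conjI allI impI)
    fix k assume "k \<le> d"
    show "v k = (\<Sum>i\<le>d. c k i *s u i)" by (rule c)
  next
    show "\<exists>\<gamma>. \<forall>i\<le>d. \<forall>k\<le>d. c k i = (if i \<le> k then \<gamma> (k - i) else 0)"
      by (rule exI[of _ "\<lambda>j. c j 0"]) (intro allI impI, erule claim[rule_format])
  qed
qed

lemma ad_of_pair:
  assumes bu: "is_basis_seq scale d u" and bv: "is_basis_seq scale d v"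
    and lX: "Vector_Spaces.linear scale scale X" and lY: "Vector_Spaces.linear scale scale Y"
    and u0: "X (u 0) = 0" and u1: "\<forall>i. 1 \<le> i \<and> i \<le> d \<longrightarrow> X (u i) = u (i - 1)"
    and uY: "\<forall>i<d. Y (u i) \<in> span {u (Suc i)}"
    and v1: "\<forall>i. 1 \<le> i \<and> i \<le> d \<longrightarrow> Y (v i) = v (i - 1)" and vd: "X (v d) = 0"
  shows "trans_antidiag scale d u v"
proof -
  have claim: "\<exists>a. v (d - m) = a *s u m" if "m \<le> d" for m
    using that
  proof (induction m)
    case 0
    obtain c where c: "v d = (\<Sum>i\<le>d. c i *s u i)" using basis_span[OF bu] by blast
    have zz: "(\<Sum>i\<le>d. (if i < d then c (Suc i) else 0) *s u i) = 0"
      using shift[OF lX u0 u1, of c] c vd by simp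
    have z: "c (Suc i) = 0" if "i < d" for i using basis_indep[OF bu zz, of i] that by simp
    have "v d = (\<Sum>i\<le>d. (if i = 0 then c 0 *s u 0 else 0))"
      unfolding c
    proof (rule sum.cong[OF refl])
      fix i assume "i \<in> {..d}"
      then show "c i *s u i = (if i = 0 then c 0 *s u 0 else 0)"
        using z[of "i - 1"] by (cases i) auto
    qed
    also have "\<dots> = c 0 *s u 0" by (simp add: sum.delta)
    finally show ?case by auto
  next
    case (Suc m)
    then obtain a where a: "v (d - m) = a *s u m" by auto
    have "Y (u m) \<in> span {u (Suc m)}" using uY Suc.prems by simp
    then obtain b where b: "Y (u m) = b *s u (Suc m)" by (auto simp: span_singleton)
    have h: "1 \<le> d - m" "d - m \<le> d" using Suc.prems by auto
    have "v (d - Suc m) = v (d - m - 1)" by simp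
    also have "\<dots> = Y (v (d - m))" using v1 h by simp
    finally have "v (d - Suc m) = Y (v (d - m))" .
    also have "\<dots> = (a * b) *s u (Suc m)" using a b lin_scale[OF lY] by simp
    finally show ?case by blast
  qed
  have "\<forall>k. \<exists>a. k \<le> d \<longrightarrow> v k = a *s u (d - k)"
  proof
    fix k show "\<exists>a. k \<le> d \<longrightarrow> v k = a *s u (d - k)"
    proof (cases "k \<le> d")
      case True then show ?thesis using claim[of "d - k"] by simp
    qed simp
  qed
  then obtain a where a: "\<And>k. k \<le> d \<Longrightarrow> v k = a k *s u (d - k)" by metis
  show ?thesis unfolding trans_antidiag_def is_transition_matrix_def antidiagonal_def
  proof (rule exI[of _ "\<lambda>i k. if i + k = d then a k else 0"], intro conjI allI impI)
    fix k assume k: "k \<le> d"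
    have "(\<Sum>i\<le>d. (if i + k = d then a k else 0) *s u i) = (\<Sum>i\<le>d. (if i = d - k then a k *s u i else 0))"
      using k by (intro sum.cong) auto
    also have "\<dots> = a k *s u (d - k)" by (simp add: sum.delta)
    finally show "v k = (\<Sum>i\<le>d. (if i + k = d then a k else 0) *s u i)" using a[OF k] by simp
  qed auto
qed

lemma xy_extract:
  assumes "is_XY_basis scale d X Y u"
  shows "Vector_Spaces.linear scale scale X \<and> Vector_Spaces.linear scale scale Y \<and> is_basis_seq scale d u \<and>
    X (u 0) = 0 \<and> (\<forall>i. 1 \<le> i \<and> i \<le> d \<longrightarrow> X (u i) = u (i - 1)) \<and>
    Y (u d) = 0 \<and> (\<forall>i<d. Y (u i) \<in> span {u (Suc i)})"
proof -
  from assms obtain Vs where lin: "Vector_Spaces.linear scale scale X" "Vector_Spaces.linear scale scale Y"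
    and b: "is_basis_seq scale d u" and D: "is_decomposition scale d Vs" and L: "lowers d X Vs"
    and R: "raises d Y Vs" and mem: "\<forall>i\<le>d. u i \<in> Vs i"
    and sh: "\<forall>i. 1 \<le> i \<and> i \<le> d \<longrightarrow> X (u i) = u (i - 1)"
    unfolding is_XY_basis_def is_LR_pair_def by (elim conjE exE) simp
  have "X (u 0) \<in> X ` Vs 0" using mem by auto
  then have x0: "X (u 0) = 0" using L by (simp add: lowers_def)
  have "Y (u d) \<in> Y ` Vs d" using mem by auto
  then have yd: "Y (u d) = 0" using R by (simp add: raises_def)
  have "Y (u i) \<in> span {u (Suc i)}" if i: "i < d" for i
  proof -
    have "Y (u i) \<in> Y ` Vs i" using mem i by auto
    then have "Y (u i) \<in> Vs (Suc i)" using R i by (simp add: raises_def)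
    moreover have "Vs (Suc i) \<subseteq> span {u (Suc i)}"
      using D i mem basis_nz[OF b, of "Suc i"] by (intro dim1_sub) (auto simp: is_decomposition_def)
    ultimately show ?thesis by auto
  qed
  then show ?thesis using lin b x0 yd sh by blast
qed

lemma ad_from_trans:
  assumes bu: "is_basis_seq scale d u" and bv: "is_basis_seq scale d v"
    and t: "trans_antidiag scale d u v"
  shows "\<forall>k\<le>d. \<exists>a. a \<noteq> 0 \<and> v k = a *s u (d - k)"
proof (intro allI impI)
  fix k assume k: "k \<le> d"
  obtain S where S: "\<forall>k\<le>d. v k = (\<Sum>i\<le>d. S i k *s u i)" and A: "antidiagonal d S"
    using t unfolding trans_antidiag_def is_transition_matrix_def by blast
  have "v k = (\<Sum>i\<le>d. S i k *s u i)" using S k by blast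
  also have "\<dots> = (\<Sum>i\<le>d. (if i = d - k then S (d - k) k *s u i else 0))"
    using A k unfolding antidiagonal_def by (intro sum.cong) auto
  also have "\<dots> = S (d - k) k *s u (d - k)" by (simp add: sum.delta)
  finally have e: "v k = S (d - k) k *s u (d - k)" .
  have "S (d - k) k \<noteq> 0" using e basis_nz[OF bv k] by auto
  with e show "\<exists>a. a \<noteq> 0 \<and> v k = a *s u (d - k)" by blast
qed

lemma ad_sym:
  fixes d :: nat and u v :: "nat \<Rightarrow> 'b"
  assumes "\<forall>k\<le>d. \<exists>a. a \<noteq> 0 \<and> v k = a *s u (d - k)"
  shows "\<forall>k\<le>d. \<exists>a. a \<noteq> 0 \<and> u k = a *s v (d - k)"
proof (intro allI impI)
  fix k assume k: "k \<le> d"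
  have dk: "d - k \<le> d" by simp
  from assms[rule_format, OF dk] obtain a where a: "a \<noteq> 0" "v (d - k) = a *s u (d - (d - k))" by blast
  have "v (d - k) = a *s u k" using a k by simp
  then have "inverse a *s v (d - k) = u k" using a by simp
  then show "\<exists>a. a \<noteq> 0 \<and> u k = a *s v (d - k)" using a by (metis inverse_zero_imp_zero)
qed

lemma utt_lower:
  assumes lX: "Vector_Spaces.linear scale scale X"
    and u0: "X (u 0) = 0" and u1: "\<forall>i. 1 \<le> i \<and> i \<le> d \<longrightarrow> X (u i) = u (i - 1)"
    and t: "trans_UTT scale d u v"
  shows "X (v 0) = 0 \<and> (\<forall>k. 1 \<le> k \<and> k \<le> d \<longrightarrow> X (v k) = v (k - 1))"
proof -
  obtain S g where S: "\<forall>k\<le>d. v k = (\<Sum>i\<le>d. S i k *s u i)"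
    and g: "\<forall>i\<le>d. \<forall>k\<le>d. S i k = (if i \<le> k then g (k - i) else 0)"
    using t unfolding trans_UTT_def is_transition_matrix_def upper_triangular_toeplitz_def by blast
  have Xv: "X (v k) = (\<Sum>i\<le>d. (if i < d then S (Suc i) k else 0) *s u i)" if "k \<le> d" for k
    using shift[OF lX u0 u1, of "\<lambda>i. S i k"] S that by simp
  have "X (v 0) = (\<Sum>i\<le>d. (if i < d then S (Suc i) 0 else 0) *s u i)" using Xv by simp
  also have "\<dots> = (\<Sum>i\<le>d. 0)" using g by (intro sum.cong) auto
  finally have z: "X (v 0) = 0" by simp
  have "X (v k) = v (k - 1)" if k: "1 \<le> k" "k \<le> d" for k
  proof -
    have "X (v k) = (\<Sum>i\<le>d. (if i < d then S (Suc i) k else 0) *s u i)" using Xv k by simp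
    also have "\<dots> = (\<Sum>i\<le>d. S i (k - 1) *s u i)"
    proof (rule sum.cong[OF refl])
      fix i assume i: "i \<in> {..d}"
      have "(if i < d then S (Suc i) k else 0) = S i (k - 1)"
      proof (cases "i < d")
        case True
        have e2: "(Suc i \<le> k) = (i \<le> k - 1)" using k by arith
        have e3: "k - Suc i = k - 1 - i" by simp
        show ?thesis using True g[rule_format, of "Suc i" k] g[rule_format, of i "k - 1"] k
          unfolding e2 e3 by simp
      next
        case False
        then have "i = d" using i by simp
        have nd: "\<not> i \<le> k - 1" using \<open>i = d\<close> k by arith
        have k1: "k - 1 \<le> d" using k by simp
        show ?thesis using False g[rule_format, of i "k - 1"] k1 nd \<open>i = d\<close> by simp
      qed
      then show "(if i < d then S (Suc i) k else 0) *s u i = S i (k - 1) *s u i" by simp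
    qed
    also have "\<dots> = v (k - 1)" using S k by simp
    finally show ?thesis .
  qed
  with z show ?thesis by blast
qed

lemma raise_from_ad:
  assumes lY: "Vector_Spaces.linear scale scale Y"
    and w0: "Y (w 0) = 0" and w1: "\<forall>i. 1 \<le> i \<and> i \<le> d \<longrightarrow> Y (w i) = w (i - 1)"
    and ad: "\<forall>k\<le>d. \<exists>a. a \<noteq> 0 \<and> u k = a *s w (d - k)"
  shows "Y (u d) = 0 \<and> (\<forall>k<d. \<exists>b. b \<noteq> 0 \<and> Y (u k) = b *s u (Suc k))"
proof -
  obtain a where a: "a \<noteq> 0" "u d = a *s w 0" using ad by auto
  have z: "Y (u d) = 0" using a w0 lin_scale[OF lY] by simp
  have "\<exists>b. b \<noteq> 0 \<and> Y (u k) = b *s u (Suc k)" if k: "k < d" for k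
  proof -
    have k1: "k \<le> d" "Suc k \<le> d" using k by auto
    obtain a where a: "a \<noteq> 0" "u k = a *s w (d - k)" using ad[rule_format, OF k1(1)] by blast
    obtain a' where a': "a' \<noteq> 0" "u (Suc k) = a' *s w (d - Suc k)" using ad[rule_format, OF k1(2)] by blast
    have "Y (w (d - k)) = w (d - k - 1)" using w1 k by simp
    also have "\<dots> = w (d - Suc k)" by simp
    also have "\<dots> = inverse a' *s u (Suc k)" using a' by simp
    finally have Yk: "Y (u k) = (a * inverse a') *s u (Suc k)" using a lin_scale[OF lY] by simp
    have "a * inverse a' \<noteq> 0" using a a' by simp
    with Yk show ?thesis by blast
  qed
  with z show ?thesis by blast
qed

lemma img_span1:
  assumes lX: "Vector_Spaces.linear scale scale X" and e: "X x = c *s y" and c: "c \<noteq> 0"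
  shows "X ` span {x} = span {y}"
proof -
  have "X ` span {x} = range (\<lambda>k. (k * c) *s y)"
    by (auto simp: span_singleton lin_scale[OF lX] e image_iff)
  also have "\<dots> = range (\<lambda>k. k *s y)"
  proof (rule set_eqI)
    fix z
    have "(\<exists>k. z = (k * c) *s y) \<longleftrightarrow> (\<exists>k. z = k *s y)"
    proof
      assume "\<exists>k. z = k *s y"
      then obtain k where "z = k *s y" by blast
      then have "z = ((k * inverse c) * c) *s y" using c by simp
      then show "\<exists>k. z = (k * c) *s y" by blast
    qed blast
    then show "z \<in> range (\<lambda>k. (k * c) *s y) \<longleftrightarrow> z \<in> range (\<lambda>k. k *s y)" by (auto simp: image_iff)
  qed
  finally show ?thesis by (simp add: span_singleton)
qed

lemma img_span0:
  assumes lX: "Vector_Spaces.linear scale scale X" and e: "X x = 0"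
  shows "X ` span {x} = {0}"
proof -
  have "0 \<in> X ` span {x}" by (rule image_eqI[of _ _ 0]) (simp_all add: lin_zero[OF lX] span_zero)
  then show ?thesis by (auto simp: span_singleton lin_scale[OF lX] e)
qed

lemma lr_of:
  assumes b: "is_basis_seq scale d u"
    and lX: "Vector_Spaces.linear scale scale X" and lY: "Vector_Spaces.linear scale scale Y"
    and u0: "X (u 0) = 0" and u1: "\<forall>i. 1 \<le> i \<and> i \<le> d \<longrightarrow> X (u i) = u (i - 1)"
    and r: "Y (u d) = 0 \<and> (\<forall>k<d. \<exists>b. b \<noteq> 0 \<and> Y (u k) = b *s u (Suc k))"
  shows "is_LR_pair scale d X Y \<and> is_XY_basis scale d X Y u"
proof -
  let ?Vs = "\<lambda>i. span {u i}"
  have D: "is_decomposition scale d ?Vs" by (rule decomp[OF b])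
  have L: "lowers d X ?Vs" unfolding lowers_def
  proof (intro conjI allI impI)
    fix i assume "1 \<le> i \<and> i \<le> d"
    then show "X ` span {u i} = span {u (i - 1)}"
      using u1 img_span1[OF lX, of "u i" 1 "u (i - 1)"] by simp
  qed (rule img_span0[OF lX u0])
  have R: "raises d Y ?Vs" unfolding raises_def
  proof (intro conjI allI impI)
    fix i assume "i < d"
    then obtain b where "b \<noteq> 0" "Y (u i) = b *s u (Suc i)" using r by blast
    then show "Y ` span {u i} = span {u (i + 1)}" using img_span1[OF lY] by simp
  next
    show "Y ` span {u d} = {0}" using r img_span0[OF lY] by simp
  qed
  have P: "is_LR_pair scale d X Y" unfolding is_LR_pair_def using lX lY D L R by blast
  moreover have "is_XY_basis scale d X Y u" unfolding is_XY_basis_def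
    using P b D L R u1 by (blast intro: span_base)
  ultimately show ?thesis by blast
qed

lemma xy_ex:
  assumes "is_XY_basis scale d X Y u"
  shows "Vector_Spaces.linear scale scale X" "Vector_Spaces.linear scale scale Y" "is_basis_seq scale d u"
    "X (u 0) = 0" "\<forall>i. 1 \<le> i \<and> i \<le> d \<longrightarrow> X (u i) = u (i - 1)"
    "Y (u d) = 0" "\<forall>i<d. Y (u i) \<in> span {u (Suc i)}"
  using xy_extract[OF assms] by blast+

lemma lower_eq:
  fixes d :: nat and u :: "nat \<Rightarrow> 'b"
  assumes "X (u 0) = 0" "\<forall>i. 1 \<le> i \<and> i \<le> d \<longrightarrow> X (u i) = u (i - 1)"
    "X' (u 0) = 0" "\<forall>i. 1 \<le> i \<and> i \<le> d \<longrightarrow> X' (u i) = u (i - 1)"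
  shows "\<forall>i\<le>d. X (u i) = X' (u i)"
proof (intro allI impI)
  fix i assume "i \<le> d" then show "X (u i) = X' (u i)" using assms by (cases "i = 0") auto
qed

lemma fwd:
  assumes b1: "is_basis_seq scale d u1" and b2: "is_basis_seq scale d u2" and b3: "is_basis_seq scale d u3"
    and b4: "is_basis_seq scale d u4" and b5: "is_basis_seq scale d u5" and b6: "is_basis_seq scale d u6"
    and t12: "trans_UTT scale d u1 u2" and t34: "trans_UTT scale d u3 u4" and t56: "trans_UTT scale d u5 u6"
    and t23: "trans_antidiag scale d u2 u3" and t45: "trans_antidiag scale d u4 u5" and t61: "trans_antidiag scale d u6 u1"
  shows "\<exists>A B C. six_bases_triple scale d u1 u2 u3 u4 u5 u6 A B C"
proof -
  obtain A where linA: "Vector_Spaces.linear scale scale A" and A: "\<forall>i\<le>d. A (u1 i) = (if i = 0 then 0 else u1 (i - 1))"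
    using exists_lin[OF b1, of "\<lambda>i. if i = 0 then 0 else u1 (i - 1)"] by blast
  obtain B where linB: "Vector_Spaces.linear scale scale B" and B: "\<forall>i\<le>d. B (u3 i) = (if i = 0 then 0 else u3 (i - 1))"
    using exists_lin[OF b3, of "\<lambda>i. if i = 0 then 0 else u3 (i - 1)"] by blast
  obtain C where linC: "Vector_Spaces.linear scale scale C" and C: "\<forall>i\<le>d. C (u5 i) = (if i = 0 then 0 else u5 (i - 1))"
    using exists_lin[OF b5, of "\<lambda>i. if i = 0 then 0 else u5 (i - 1)"] by blast
  have lA1: "A (u1 0) = 0" "\<forall>i. 1 \<le> i \<and> i \<le> d \<longrightarrow> A (u1 i) = u1 (i - 1)" using A by auto
  have lB3: "B (u3 0) = 0" "\<forall>i. 1 \<le> i \<and> i \<le> d \<longrightarrow> B (u3 i) = u3 (i - 1)" using B by auto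
  have lC5: "C (u5 0) = 0" "\<forall>i. 1 \<le> i \<and> i \<le> d \<longrightarrow> C (u5 i) = u5 (i - 1)" using C by auto
  have lA2: "A (u2 0) = 0" "\<forall>i. 1 \<le> i \<and> i \<le> d \<longrightarrow> A (u2 i) = u2 (i - 1)"
    using utt_lower[OF linA lA1 t12] by auto
  have lB4: "B (u4 0) = 0" "\<forall>i. 1 \<le> i \<and> i \<le> d \<longrightarrow> B (u4 i) = u4 (i - 1)"
    using utt_lower[OF linB lB3 t34] by auto
  have lC6: "C (u6 0) = 0" "\<forall>i. 1 \<le> i \<and> i \<le> d \<longrightarrow> C (u6 i) = u6 (i - 1)"
    using utt_lower[OF linC lC5 t56] by auto
  have ad23: "\<forall>k\<le>d. \<exists>a. a \<noteq> 0 \<and> u3 k = a *s u2 (d - k)" by (rule ad_from_trans[OF b2 b3 t23])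
  have ad45: "\<forall>k\<le>d. \<exists>a. a \<noteq> 0 \<and> u5 k = a *s u4 (d - k)" by (rule ad_from_trans[OF b4 b5 t45])
  have ad61: "\<forall>k\<le>d. \<exists>a. a \<noteq> 0 \<and> u1 k = a *s u6 (d - k)" by (rule ad_from_trans[OF b6 b1 t61])
  note ad32 = ad_sym[OF ad23] and ad54 = ad_sym[OF ad45] and ad16 = ad_sym[OF ad61]
  note p1 = lr_of[OF b1 linA linC lA1 raise_from_ad[OF linC lC6 ad61]]
  note p2 = lr_of[OF b2 linA linB lA2 raise_from_ad[OF linB lB3 ad32]]
  note p3 = lr_of[OF b3 linB linA lB3 raise_from_ad[OF linA lA2 ad23]]
  note p4 = lr_of[OF b4 linB linC lB4 raise_from_ad[OF linC lC5 ad54]]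
  note p5 = lr_of[OF b5 linC linB lC5 raise_from_ad[OF linB lB4 ad45]]
  note p6 = lr_of[OF b6 linC linA lC6 raise_from_ad[OF linA lA1 ad16]]
  have "six_bases_triple scale d u1 u2 u3 u4 u5 u6 A B C"
    unfolding six_bases_triple_def is_LR_triple_def by (simp only: p1 p2 p3 p4 p5 p6 simp_thms)
  then show ?thesis by (rule exI[of _ A, OF exI[of _ B, OF exI[of _ C]]])
qed

lemma bwd:
  assumes "six_bases_triple scale d u1 u2 u3 u4 u5 u6 A B C"
  shows "trans_UTT scale d u1 u2 \<and> trans_UTT scale d u3 u4 \<and> trans_UTT scale d u5 u6 \<and>
     trans_antidiag scale d u2 u3 \<and> trans_antidiag scale d u4 u5 \<and> trans_antidiag scale d u6 u1"
proof -
  have h: "is_XY_basis scale d A C u1" "is_XY_basis scale d A B u2" "is_XY_basis scale d B A u3"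
    "is_XY_basis scale d B C u4" "is_XY_basis scale d C B u5" "is_XY_basis scale d C A u6"
    using assms unfolding six_bases_triple_def by blast+
  note x1 = xy_ex[OF h(1)] and x2 = xy_ex[OF h(2)] and x3 = xy_ex[OF h(3)]
    and x4 = xy_ex[OF h(4)] and x5 = xy_ex[OF h(5)] and x6 = xy_ex[OF h(6)]
  have "trans_UTT scale d u1 u2" by (rule utt_of_lower[OF x1(3) x2(3) x1(1) x1(4,5) x2(4,5)])
  moreover have "trans_UTT scale d u3 u4" by (rule utt_of_lower[OF x3(3) x4(3) x3(1) x3(4,5) x4(4,5)])
  moreover have "trans_UTT scale d u5 u6" by (rule utt_of_lower[OF x5(3) x6(3) x5(1) x5(4,5) x6(4,5)])
  moreover have "trans_antidiag scale d u2 u3"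
    by (rule ad_of_pair[OF x2(3) x3(3) x2(1) x2(2) x2(4,5) x2(7) x3(5) x3(6)])
  moreover have "trans_antidiag scale d u4 u5"
    by (rule ad_of_pair[OF x4(3) x5(3) x4(1) x4(2) x4(4,5) x4(7) x5(5) x5(6)])
  moreover have "trans_antidiag scale d u6 u1"
    by (rule ad_of_pair[OF x6(3) x1(3) x6(1) x6(2) x6(4,5) x6(7) x1(5) x1(6)])
  ultimately show ?thesis by blast
qed

lemma uniq:
  assumes "six_bases_triple scale d u1 u2 u3 u4 u5 u6 A B C"
    and "six_bases_triple scale d u1 u2 u3 u4 u5 u6 A' B' C'"
  shows "A = A' \<and> B = B' \<and> C = C'"
proof -
  have h: "is_XY_basis scale d A C u1" "is_XY_basis scale d B A u3" "is_XY_basis scale d C B u5"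
    "is_XY_basis scale d A' C' u1" "is_XY_basis scale d B' A' u3" "is_XY_basis scale d C' B' u5"
    using assms unfolding six_bases_triple_def by blast+
  note x1 = xy_ex[OF h(1)] and x3 = xy_ex[OF h(2)] and x5 = xy_ex[OF h(3)]
  note y1 = xy_ex[OF h(4)] and y3 = xy_ex[OF h(5)] and y5 = xy_ex[OF h(6)]
  have "A = A'" by (rule lin_eq_basis[OF x1(3) x1(1) y1(1) lower_eq[OF x1(4,5) y1(4,5)]])
  moreover have "B = B'" by (rule lin_eq_basis[OF x3(3) x3(1) y3(1) lower_eq[OF x3(4,5) y3(4,5)]])
  moreover have "C = C'" by (rule lin_eq_basis[OF x5(3) x5(1) y5(1) lower_eq[OF x5(4,5) y5(4,5)]])
  ultimately show ?thesis by blast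
qed

end

theorem theorem34p1:
  fixes scale :: "'f::field \<Rightarrow> 'v::ab_group_add \<Rightarrow> 'v"
    and d :: nat
    and u1 u2 u3 u4 u5 u6 :: "nat \<Rightarrow> 'v"
  assumes "vector_space scale"
    and "vector_space.dim scale (UNIV :: 'v set) = d + 1"
    and "is_basis_seq scale d u1" "is_basis_seq scale d u2" "is_basis_seq scale d u3"
    and "is_basis_seq scale d u4" "is_basis_seq scale d u5" "is_basis_seq scale d u6"
  shows "((trans_UTT scale d u1 u2 \<and> trans_UTT scale d u3 u4 \<and> trans_UTT scale d u5 u6 \<and>
           trans_antidiag scale d u2 u3 \<and> trans_antidiag scale d u4 u5 \<and> trans_antidiag scale d u6 u1)
          \<longleftrightarrow> (\<exists>A B C. six_bases_triple scale d u1 u2 u3 u4 u5 u6 A B C))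
       \<and> (\<forall>A B C A' B' C'.
            six_bases_triple scale d u1 u2 u3 u4 u5 u6 A B C \<and>
            six_bases_triple scale d u1 u2 u3 u4 u5 u6 A' B' C' \<longrightarrow>
            A = A' \<and> B = B' \<and> C = C')"
proof -
  interpret vector_space scale by (rule assms(1))
  have i1: "(trans_UTT scale d u1 u2 \<and> trans_UTT scale d u3 u4 \<and> trans_UTT scale d u5 u6 \<and>
           trans_antidiag scale d u2 u3 \<and> trans_antidiag scale d u4 u5 \<and> trans_antidiag scale d u6 u1)
          \<longleftrightarrow> (\<exists>A B C. six_bases_triple scale d u1 u2 u3 u4 u5 u6 A B C)"
  proof
    assume h: "trans_UTT scale d u1 u2 \<and> trans_UTT scale d u3 u4 \<and> trans_UTT scale d u5 u6 \<and>
           trans_antidiag scale d u2 u3 \<and> trans_antidiag scale d u4 u5 \<and> trans_antidiag scale d u6 u1"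
    show "\<exists>A B C. six_bases_triple scale d u1 u2 u3 u4 u5 u6 A B C"
      using h by (intro fwd[OF assms(3-8)]) simp_all
  next
    assume "\<exists>A B C. six_bases_triple scale d u1 u2 u3 u4 u5 u6 A B C"
    then obtain A B C where "six_bases_triple scale d u1 u2 u3 u4 u5 u6 A B C" by blast
    then show "trans_UTT scale d u1 u2 \<and> trans_UTT scale d u3 u4 \<and> trans_UTT scale d u5 u6 \<and>
           trans_antidiag scale d u2 u3 \<and> trans_antidiag scale d u4 u5 \<and> trans_antidiag scale d u6 u1"
      by (rule bwd)
  qed
  have i2: "\<forall>A B C A' B' C'.
            six_bases_triple scale d u1 u2 u3 u4 u5 u6 A B C \<and>
            six_bases_triple scale d u1 u2 u3 u4 u5 u6 A' B' C' \<longrightarrow>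
            A = A' \<and> B = B' \<and> C = C'"
    by (intro allI impI, elim conjE, rule uniq)
  show ?thesis using i1 i2 by (rule conjI)
qed

end
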